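(* Let $\varphi$ be a closed recHML formula. If there is a reactive monitor (possibly containing $\otimes,\oplus$) that is sound and violation-complete (resp. satisfaction-complete) for $\varphi$ over finfinite traces, then there is some $\psi\in\mathrm{sHML}$ (resp. $\psi\in\mathrm{cHML}$) with $[\![\psi]\!]_F=[\![\varphi]\!]_F$.
   Context: Fix a finite set $\mathrm{Act}$ of actions, $\tau\notin\mathrm{Act}$. recHML formulae: $\varphi::=\mathrm{tt}\mid\mathrm{ff}\mid\varphi\vee\varphi\mid\varphi\wedge\varphi\mid\langle A\rangle\varphi\mid[A]\varphi\mid\min X.\varphi\mid\max X.\varphi\mid X$ ($A\subseteq\mathrm{Act}$), guarded. $\mathrm{sHML}$: $\varphi::=\mathrm{tt}\mid\mathrm{ff}\mid[A]\varphi\mid\varphi\wedge\varphi\mid\max X.\varphi\mid X$; $\mathrm{cHML}$: $\varphi::=\mathrm{tt}\mid\mathrm{ff}\mid\langle A\rangle\varphi\mid\varphi\vee\varphi\mid\min X.\varphi\mid X$. Finfinite traces $\mathrm{Fin}=\mathrm{Act}^\omega\cup\mathrm{Act}^*$; finfinite semantics: $[\![\mathrm{tt}]\!]_F=\mathrm{Fin}$, $[\![\mathrm{ff}]\!]_F=\emptyset$, $\vee,\wedge$ union/intersection, $[\![\langle A\rangle\varphi,\sigma]\!]_F=\{ag\mid a\in A,g\in[\![\varphi,\sigma]\!]_F\}$, $[\![[A]\varphi,\sigma]\!]_F=\{g\mid\forall a\in A,\forall g'.\ g=ag'\Rightarrow g'\in[\![\varphi,\sigma]\!]_F\}$, $\min/\max$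 as least/greatest fixpoints, $[\![X,\sigma]\!]_F=\sigma(X)$. Monitors: $m,n::=v\mid a.m\mid m+n\mid\mathrm{rec}\,x.m\mid x\mid m\otimes n\mid m\oplus n$, verdicts $v::=\mathrm{end}\mid\mathrm{no}\mid\mathrm{yes}$, transitions ($\mu\in\mathrm{Act}\cup\{\tau\}$, $a\in\mathrm{Act}$, $\odot\in\{\otimes,\oplus\}$): $a.m\xrightarrow{a}m$; $\mathrm{rec}\,x.m\xrightarrow{\tau}m[\mathrm{rec}\,x.m/x]$; if $m\xrightarrow{\mu}m'$ then $m+n\xrightarrow{\mu}m'$ and $n+m\xrightarrow{\mu}m'$; $v\xrightarrow{a}v$; if $m\xrightarrow{a}m'$ and $n\xrightarrow{a}n'$ then $m\odot n\xrightarrow{a}m'\odot n'$; if $m\xrightarrow{\tau}m'$ then $m\odot n\xrightarrow{\tau}m'\odot n$ and $n\odot m\xrightarrow{\tau}n\odot m'$; $\mathrm{end}\odot\mathrm{end}\xrightarrow{\tau}\mathrm{end}$; $\mathrm{yes}\otimes m\xrightarrow{\tau}m$, $\mathrm{no}\otimes m\xrightarrow{\tau}\mathrm{no}$, $\mathrm{no}\oplus m\xrightarrow{\tau}m$, $\mathrm{yes}\oplus m\xrightarrow{\tau}\mathrm{yes}$, and symmetric versions. Weak transitions as usual. A monitor is reactive if every state reachable from it can weakly perform every $a\in\mathrm{Act}$. $m$ rejects (accepts) $s\in\mathrm{Act}^*$ iff $m\overset{s}{\Longrightarrow}\mathrm{no}$ ($\mathrm{yes}$), and rejects (accepts) $g\in\mathrm{Fin}$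 iff it rejects (accepts) some finite prefix of $g$. $m$ is sound for $\varphi$ over finfinite traces if for all $g\in\mathrm{Fin}$, rejecting $g$ implies $g\notin[\![\varphi]\!]_F$ and accepting $g$ implies $g\in[\![\varphi]\!]_F$; violation-complete if $g\notin[\![\varphi]\!]_F$ implies $m$ rejects $g$; satisfaction-complete if $g\in[\![\varphi]\!]_F$ implies $m$ accepts $g$. *)

theory Defs
  imports Main
begin

datatype 'a ftrace = FinT "'a list" | InfT "nat \<Rightarrow> 'a"

fun tcons :: "'a \<Rightarrow> 'a ftrace \<Rightarrow> 'a ftrace" where
  "tcons a (FinT l) = FinT (a # l)"
| "tcons a (InfT f) = InfT (case_nat a f)"

definition tapp :: "'a list \<Rightarrow> 'a ftrace \<Rightarrow> 'a ftrace" where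
  "tapp s g = foldr tcons s g"

definition tprefix :: "'a list \<Rightarrow> 'a ftrace \<Rightarrow> bool" where
  "tprefix s g \<longleftrightarrow> (\<exists>g'. g = tapp s g')"

type_synonym var = nat

datatype 'a form =
    TT | FF
  | Or "'a form" "'a form"
  | And "'a form" "'a form"
  | Dia "'a set" "'a form"
  | Box "'a set" "'a form"
  | Min var "'a form"
  | Max var "'a form"
  | FVar var

fun fv :: "'a form \<Rightarrow> var set" where
  "fv TT = {}" | "fv FF = {}"
| "fv (Or p q) = fv p \<union> fv q" | "fv (And p q) = fv p \<union> fv q"
| "fv (Dia A p) = fv p" | "fv (Box A p) = fv p"
| "fv (Min x p) = fv p - {x}" | "fv (Max x p) = fv p - {x}"
| "fv (FVar x) = {x}"

definition closed_form :: "'a form \<Rightarrow> bool" where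
  "closed_form p \<longleftrightarrow> fv p = {}"

text \<open>guarded_in S p: no variable of S (bound by an enclosing fixpoint without an
  intervening modality) occurs unguarded in p\<close>
fun guarded_in :: "var set \<Rightarrow> 'a form \<Rightarrow> bool" where
  "guarded_in S TT = True" | "guarded_in S FF = True"
| "guarded_in S (Or p q) = (guarded_in S p \<and> guarded_in S q)"
| "guarded_in S (And p q) = (guarded_in S p \<and> guarded_in S q)"
| "guarded_in S (Dia A p) = guarded_in {} p"
| "guarded_in S (Box A p) = guarded_in {} p"
| "guarded_in S (Min x p) = guarded_in (insert x S) p"
| "guarded_in S (Max x p) = guarded_in (insert x S) p"
| "guarded_in S (FVar x) = (x \<notin> S)"

definition guarded :: "'a form \<Rightarrow> bool" where
  "guarded p \<longleftrightarrow> guarded_in {} p"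

fun is_sHML :: "'a form \<Rightarrow> bool" where
  "is_sHML TT = True" | "is_sHML FF = True"
| "is_sHML (Box A p) = is_sHML p"
| "is_sHML (And p q) = (is_sHML p \<and> is_sHML q)"
| "is_sHML (Max x p) = is_sHML p"
| "is_sHML (FVar x) = True"
| "is_sHML _ = False"

fun is_cHML :: "'a form \<Rightarrow> bool" where
  "is_cHML TT = True" | "is_cHML FF = True"
| "is_cHML (Dia A p) = is_cHML p"
| "is_cHML (Or p q) = (is_cHML p \<and> is_cHML q)"
| "is_cHML (Min x p) = is_cHML p"
| "is_cHML (FVar x) = True"
| "is_cHML _ = False"

fun semF :: "'a form \<Rightarrow> (var \<Rightarrow> 'a ftrace set) \<Rightarrow> 'a ftrace set" where
  "semF TT \<sigma> = UNIV"
| "semF FF \<sigma> = {}"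
| "semF (Or p q) \<sigma> = semF p \<sigma> \<union> semF q \<sigma>"
| "semF (And p q) \<sigma> = semF p \<sigma> \<inter> semF q \<sigma>"
| "semF (Dia A p) \<sigma> = {tcons a g | a g. a \<in> A \<and> g \<in> semF p \<sigma>}"
| "semF (Box A p) \<sigma> = {g. \<forall>a\<in>A. \<forall>g'. g = tcons a g' \<longrightarrow> g' \<in> semF p \<sigma>}"
| "semF (Min x p) \<sigma> = lfp (\<lambda>S. semF p (\<sigma>(x := S)))"
| "semF (Max x p) \<sigma> = gfp (\<lambda>S. semF p (\<sigma>(x := S)))"
| "semF (FVar x) \<sigma> = \<sigma> x"

text \<open>semantics of a closed formula (environment irrelevant)\<close>
definition semC :: "'a form \<Rightarrow> 'a ftrace set" where
  "semC p = semF p (\<lambda>_. {})"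

datatype verdict = End | No | Yes
datatype parop = OTimes | OPlus

datatype 'a mon =
    V verdict
  | Pre 'a "'a mon"
  | Sum "'a mon" "'a mon"
  | Rec var "'a mon"
  | MVar var
  | Par parop "'a mon" "'a mon"

fun mfv :: "'a mon \<Rightarrow> var set" where
  "mfv (V v) = {}" | "mfv (Pre a m) = mfv m"
| "mfv (Sum m n) = mfv m \<union> mfv n" | "mfv (Rec x m) = mfv m - {x}"
| "mfv (MVar x) = {x}" | "mfv (Par o' m n) = mfv m \<union> mfv n"

definition closed_mon :: "'a mon \<Rightarrow> bool" where
  "closed_mon m \<longleftrightarrow> mfv m = {}"

text \<open>msubst m x n = m[n/x]\<close>
fun msubst :: "'a mon \<Rightarrow> var \<Rightarrow> 'a mon \<Rightarrow> 'a mon" where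
  "msubst (V v) x n = V v"
| "msubst (Pre a m) x n = Pre a (msubst m x n)"
| "msubst (Sum m1 m2) x n = Sum (msubst m1 x n) (msubst m2 x n)"
| "msubst (Rec y m) x n = (if y = x then Rec y m else Rec y (msubst m x n))"
| "msubst (MVar y) x n = (if y = x then n else MVar y)"
| "msubst (Par o' m1 m2) x n = Par o' (msubst m1 x n) (msubst m2 x n)"

text \<open>labels: Some a for an action, None for tau\<close>
inductive step :: "'a mon \<Rightarrow> 'a option \<Rightarrow> 'a mon \<Rightarrow> bool" where
  sPre: "step (Pre a m) (Some a) m"
| sRec: "step (Rec x m) None (msubst m x (Rec x m))"
| sSumL: "step m \<mu> m' \<Longrightarrow> step (Sum m n) \<mu> m'"
| sSumR: "step m \<mu> m' \<Longrightarrow> step (Sum n m) \<mu> m'"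
| sVerd: "step (V v) (Some a) (V v)"
| sPar: "step m (Some a) m' \<Longrightarrow> step n (Some a) n' \<Longrightarrow> step (Par o' m n) (Some a) (Par o' m' n')"
| sParTL: "step m None m' \<Longrightarrow> step (Par o' m n) None (Par o' m' n)"
| sParTR: "step m None m' \<Longrightarrow> step (Par o' n m) None (Par o' n m')"
| sEnd: "step (Par o' (V End) (V End)) None (V End)"
| sYesT1: "step (Par OTimes (V Yes) m) None m"
| sYesT2: "step (Par OTimes m (V Yes)) None m"
| sNoT1: "step (Par OTimes (V No) m) None (V No)"
| sNoT2: "step (Par OTimes m (V No)) None (V No)"
| sNoP1: "step (Par OPlus (V No) m) None m"
| sNoP2: "step (Par OPlus m (V No)) None m"
| sYesP1: "step (Par OPlus (V Yes) m) None (V Yes)"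
| sYesP2: "step (Par OPlus m (V Yes)) None (V Yes)"

inductive wtrans :: "'a mon \<Rightarrow> 'a list \<Rightarrow> 'a mon \<Rightarrow> bool" where
  wRefl: "wtrans m [] m"
| wTau: "step m None m' \<Longrightarrow> wtrans m' s m'' \<Longrightarrow> wtrans m s m''"
| wAct: "step m (Some a) m' \<Longrightarrow> wtrans m' s m'' \<Longrightarrow> wtrans m (a # s) m''"

definition reachable :: "'a mon \<Rightarrow> 'a mon \<Rightarrow> bool" where
  "reachable m m' \<longleftrightarrow> (\<exists>s. wtrans m s m')"

definition reactive :: "'a mon \<Rightarrow> bool" where
  "reactive m \<longleftrightarrow> (\<forall>m'. reachable m m' \<longrightarrow> (\<forall>a. \<exists>m''. wtrans m' [a] m''))"

definition rejects :: "'a mon \<Rightarrow> 'a ftrace \<Rightarrow> bool" where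
  "rejects m g \<longleftrightarrow> (\<exists>s. tprefix s g \<and> wtrans m s (V No))"

definition accepts :: "'a mon \<Rightarrow> 'a ftrace \<Rightarrow> bool" where
  "accepts m g \<longleftrightarrow> (\<exists>s. tprefix s g \<and> wtrans m s (V Yes))"

definition sound :: "'a mon \<Rightarrow> 'a form \<Rightarrow> bool" where
  "sound m p \<longleftrightarrow> (\<forall>g. (rejects m g \<longrightarrow> g \<notin> semC p) \<and> (accepts m g \<longrightarrow> g \<in> semC p))"

definition viol_complete :: "'a mon \<Rightarrow> 'a form \<Rightarrow> bool" where
  "viol_complete m p \<longleftrightarrow> (\<forall>g. g \<notin> semC p \<longrightarrow> rejects m g)"

definition sat_complete :: "'a mon \<Rightarrow> 'a form \<Rightarrow> bool" where
  "sat_complete m p \<longleftrightarrow> (\<forall>g. g \<in> semC p \<longrightarrow> accepts m g)"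

end

theory Submission
  imports Defs
begin

lemma lfp_dual:
  assumes m: "mono (f::'b set \<Rightarrow> 'b set)"
  shows "lfp (\<lambda>S. - f (- S)) = - gfp f"
proof -
  let ?g = "\<lambda>S. - f (- S)"
  have mg: "mono ?g" using m by (auto simp: mono_def)
  have "?g (- gfp f) = - gfp f" using gfp_unfold[OF m] by simp
  hence 1: "lfp ?g \<subseteq> - gfp f" by (intro lfp_lowerbound) simp
  have "lfp ?g = ?g (lfp ?g)" by (rule lfp_unfold[OF mg])
  hence "f (- lfp ?g) = - lfp ?g" by (metis double_compl)
  hence "- lfp ?g \<subseteq> gfp f" by (intro gfp_upperbound) simp
  with 1 show ?thesis by blast
qed

lemma semF_mono: "(\<And>x. \<sigma> x \<subseteq> \<sigma>' x) \<Longrightarrow> semF p \<sigma> \<subseteq> semF p \<sigma>'"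
proof (induction p arbitrary: \<sigma> \<sigma>')
  case (Min x p)
  have "\<And>S. semF p (\<sigma>(x:=S)) \<subseteq> semF p (\<sigma>'(x:=S))" using Min by (intro Min.IH) auto
  then show ?case by (simp add: lfp_mono)
next
  case (Max x p)
  have "\<And>S. semF p (\<sigma>(x:=S)) \<subseteq> semF p (\<sigma>'(x:=S))" using Max by (intro Max.IH) auto
  then show ?case by (simp add: gfp_mono)
next
  case (Or p q) then show ?case by (metis semF.simps(3) Un_mono)
next
  case (And p q) then show ?case by (metis semF.simps(4) Int_mono)
next
  case (Dia A p)
  have "semF p \<sigma> \<subseteq> semF p \<sigma>'" using Dia by blast
  then show ?case by auto
next
  case (Box A p)
  have "semF p \<sigma> \<subseteq> semF p \<sigma>'" using Box by blast
  then show ?case by auto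
next
  case (FVar x) then show ?case by simp
qed simp_all

lemma mono_semF: "mono (\<lambda>S. semF p (\<sigma>(x:=S)))"
  by (rule monoI, rule semF_mono) auto

lemma case_nat_eq: "case_nat a f = case_nat b f' \<longleftrightarrow> a = b \<and> f = f'"
proof
  assume h: "case_nat a f = case_nat b f'"
  have "a = b" using fun_cong[OF h, of 0] by simp
  moreover have "f = f'" proof
    fix x show "f x = f' x" using fun_cong[OF h, of "Suc x"] by simp
  qed
  ultimately show "a = b \<and> f = f'" ..
qed simp

lemma tcons_inj[simp]: "tcons a g = tcons b h \<longleftrightarrow> a = b \<and> g = h"
  by (cases g; cases h) (simp_all add: case_nat_eq)

lemma tapp_simps[simp]: "tapp [] g = g" "tapp (a#s) g = tcons a (tapp s g)"
  by (auto simp: tapp_def)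


definition res :: "'a \<Rightarrow> 'a ftrace set \<Rightarrow> 'a ftrace set" where
  "res a R = {g. tcons a g \<in> R}"

fun Ands :: "'a form list \<Rightarrow> 'a form" where
  "Ands [] = TT" | "Ands (p#ps) = And p (Ands ps)"

lemma semF_Ands: "semF (Ands ps) \<sigma> = (\<Inter>p\<in>set ps. semF p \<sigma>)"
  by (induction ps) auto

lemma sHML_Ands: "(\<forall>p\<in>set ps. is_sHML p) \<Longrightarrow> is_sHML (Ands ps)"
  by (induction ps) auto

lemma guarded_Ands: "(\<forall>p\<in>set ps. guarded_in S p) \<Longrightarrow> guarded_in S (Ands ps)"
  by (induction ps) auto

lemma fv_Ands: "fv (Ands ps) = (\<Union>p\<in>set ps. fv p)"
  by (induction ps) auto

definition acts :: "'a::finite list" where "acts = (SOME xs. set xs = UNIV)"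

lemma set_acts[simp]: "set (acts::'a::finite list) = UNIV"
  unfolding acts_def by (rule someI_ex) (rule finite_list[OF finite_UNIV])

fun mk :: "('a ftrace set \<Rightarrow> nat) \<Rightarrow> nat \<Rightarrow> 'a::finite ftrace set \<Rightarrow> 'a ftrace set set \<Rightarrow> 'a form" where
  "mk idx 0 R VV = (if R = {} then FF else FVar (idx R))"
| "mk idx (Suc n) R VV = (if R = {} then FF else if R \<in> VV then FVar (idx R)
     else Max (idx R) (Ands (map (\<lambda>a. Box {a} (mk idx n (res a R) (insert R VV))) acts)))"

lemma mk_sHML: "is_sHML (mk idx n R VV)"
  by (induction n arbitrary: R VV) (auto intro!: sHML_Ands)

lemma mk_guarded: "guarded_in {} (mk idx n R VV)"
  by (induction n arbitrary: R VV) (auto intro!: guarded_Ands)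

definition Good :: "nat \<Rightarrow> 'a ftrace set \<Rightarrow> 'a ftrace set" where
  "Good k R = {g. \<forall>s. length s < k \<longrightarrow> tprefix s g \<longrightarrow> (\<exists>h. tapp s h \<in> R)}"

lemma Good_0[simp]: "Good 0 R = UNIV" by (simp add: Good_def)

lemma Good_anti: "j \<le> k \<Longrightarrow> Good k R \<subseteq> Good j R"
  by (auto simp: Good_def)

lemma Good_step:
  assumes "R \<noteq> {}" "\<And>a g'. g = tcons a g' \<Longrightarrow> g' \<in> Good j (res a R)"
  shows "g \<in> Good (Suc j) R"
  unfolding Good_def
proof (intro CollectI allI impI)
  fix s assume l: "length s < Suc j" and p: "tprefix s g"
  show "\<exists>h. tapp s h \<in> R"
  proof (cases s)
    case Nil then show ?thesis using assms(1) by auto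
  next
    case (Cons b s')
    from p obtain g'' where g: "g = tcons b (tapp s' g'')" by (auto simp: tprefix_def Cons)
    have "tapp s' g'' \<in> Good j (res b R)" using assms(2)[OF g] .
    moreover have "tprefix s' (tapp s' g'')" by (auto simp: tprefix_def)
    moreover have "length s' < j" using l Cons by simp
    ultimately obtain h where "tapp s' h \<in> res b R" by (auto simp: Good_def)
    then show ?thesis by (auto simp: res_def Cons)
  qed
qed

locale fam =
  fixes Rs :: "'a::finite ftrace set set" and idx :: "'a ftrace set \<Rightarrow> nat"
  assumes fin: "finite Rs" and inj: "inj_on idx Rs" and clo: "\<And>R a. R \<in> Rs \<Longrightarrow> res a R \<in> Rs"
begin

lemma fuel0: "R \<in> Rs \<Longrightarrow> VV \<subseteq> Rs \<Longrightarrow> card (Rs - VV) \<le> 0 \<Longrightarrow> R \<in> VV"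
  using fin by (metis Diff_eq_empty_iff card_0_eq finite_Diff le_zero_eq subset_iff)

lemma fuelS: "R \<in> Rs \<Longrightarrow> R \<notin> VV \<Longrightarrow> card (Rs - VV) \<le> Suc n \<Longrightarrow> card (Rs - insert R VV) \<le> n"
proof -
  assume a: "R \<in> Rs" "R \<notin> VV" "card (Rs - VV) \<le> Suc n"
  have "Rs - insert R VV = (Rs - VV) - {R}" by blast
  moreover have "R \<in> Rs - VV" using a by blast
  ultimately have "card (Rs - insert R VV) = card (Rs - VV) - 1"
    using fin by (simp add: card_Diff_singleton)
  with a(3) show ?thesis by simp
qed

lemma mk_fv: "R \<in> Rs \<Longrightarrow> VV \<subseteq> Rs \<Longrightarrow> card (Rs - VV) \<le> n \<Longrightarrow> fv (mk idx n R VV) \<subseteq> idx ` VV"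
proof (induction n arbitrary: R VV)
  case 0 then show ?case using fuel0 by auto
next
  case (Suc n)
  show ?case
  proof (cases "R = {} \<or> R \<in> VV")
    case True then show ?thesis by auto
  next
    case False
    have "\<And>a. fv (mk idx n (res a R) (insert R VV)) \<subseteq> idx ` insert R VV"
      using Suc False clo fuelS by (intro Suc.IH) auto
    then show ?thesis using False by (auto simp: fv_Ands)
  qed
qed

lemma mk_lower: "R \<in> Rs \<Longrightarrow> VV \<subseteq> Rs \<Longrightarrow> card (Rs - VV) \<le> n \<Longrightarrow> (\<forall>Q\<in>VV. Q \<subseteq> \<sigma> (idx Q))
   \<Longrightarrow> R \<subseteq> semF (mk idx n R VV) \<sigma>"
proof (induction n arbitrary: R VV \<sigma>)
  case 0 then show ?case using fuel0 by auto
next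
  case (Suc n)
  show ?case
  proof (cases "R = {} \<or> R \<in> VV")
    case True then show ?thesis using Suc by auto
  next
    case False
    let ?s = "\<sigma>(idx R := R)"
    have env: "\<forall>Q\<in>insert R VV. Q \<subseteq> ?s (idx Q)"
    proof
      fix Q assume Q: "Q \<in> insert R VV"
      show "Q \<subseteq> ?s (idx Q)"
      proof (cases "Q = R")
        case False
        then have "idx Q \<noteq> idx R" using inj Q Suc.prems(1,2) by (meson inj_onD insertE subsetD)
        then show ?thesis using Suc.prems(4) Q False by auto
      qed simp
    qed
    have IH: "\<And>a. res a R \<subseteq> semF (mk idx n (res a R) (insert R VV)) ?s"
      using Suc False clo fuelS env by (intro Suc.IH) auto
    have "R \<subseteq> semF (Ands (map (\<lambda>a. Box {a} (mk idx n (res a R) (insert R VV))) acts)) ?s"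
      unfolding semF_Ands using IH by (auto simp: res_def)
    then have "R \<subseteq> gfp (\<lambda>S. semF (Ands (map (\<lambda>a. Box {a} (mk idx n (res a R) (insert R VV))) acts)) (\<sigma>(idx R := S)))"
      by (intro gfp_upperbound) simp
    then show ?thesis using False by simp
  qed
qed

lemma mk_upper: "R \<in> Rs \<Longrightarrow> VV \<subseteq> Rs \<Longrightarrow> card (Rs - VV) \<le> n \<Longrightarrow> (\<forall>Q\<in>VV. \<sigma> (idx Q) \<subseteq> Good k Q)
   \<Longrightarrow> semF (mk idx n R VV) \<sigma> \<subseteq> Good k R"
proof (induction n arbitrary: R VV \<sigma> k)
  case 0 then show ?case using fuel0 by auto
next
  case (Suc n)
  note prems = Suc.prems and oIH = Suc.IH
  show ?case
  proof (cases "R = {} \<or> R \<in> VV")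
    case True then show ?thesis using Suc by auto
  next
    case False
    define body where "body = Ands (map (\<lambda>a. Box {a} (mk idx n (res a R) (insert R VV))) acts)"
    define G where "G = gfp (\<lambda>S. semF body (\<sigma>(idx R := S)))"
    have Gun: "G = semF body (\<sigma>(idx R := G))" unfolding G_def by (rule gfp_unfold[OF mono_semF])
    have "\<forall>j\<le>k. G \<subseteq> Good j R"
    proof (intro allI)
      fix j show "j \<le> k \<longrightarrow> G \<subseteq> Good j R"
      proof (induction j)
        case (Suc j)
        show ?case
        proof
          assume jk: "Suc j \<le> k"
          then have Gj: "G \<subseteq> Good j R" using Suc by simp
          let ?s = "\<sigma>(idx R := G)"
          have env: "\<forall>Q\<in>insert R VV. ?s (idx Q) \<subseteq> Good j Q"
          proof
            fix Q assume Q: "Q \<in> insert R VV"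
            show "?s (idx Q) \<subseteq> Good j Q"
            proof (cases "Q = R")
              case False
              then have "idx Q \<noteq> idx R" using inj Q prems
                by (meson inj_onD insertE subsetD)
              then show ?thesis using prems(4) Q False Good_anti[of j k] jk
                by auto
            qed (use Gj in simp)
          qed
          have IH: "\<And>a. semF (mk idx n (res a R) (insert R VV)) ?s \<subseteq> Good j (res a R)"
            using prems False clo fuelS env
            by (intro oIH) auto
          show "G \<subseteq> Good (Suc j) R"
          proof
            fix g assume "g \<in> G"
            then have "g \<in> semF body ?s" using Gun by simp
            then have "\<And>a g'. g = tcons a g' \<Longrightarrow> g' \<in> Good j (res a R)"
              unfolding body_def semF_Ands using IH by fastforce
            then show "g \<in> Good (Suc j) R" using False by (intro Good_step) auto
          qed
        qed
      qed simp
    qed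
    then have "G \<subseteq> Good k R" by simp
    then show ?thesis using False by (simp add: G_def body_def)
  qed
qed

end


lemma safety_sHML:
  fixes L :: "'a::finite ftrace set"
  assumes fin: "finite Rs" and clo: "\<forall>R\<in>Rs. \<forall>a. res a R \<in> Rs" and L: "L \<in> Rs"
    and saf: "\<forall>g. g \<notin> L \<longrightarrow> (\<exists>s. tprefix s g \<and> (\<forall>h. tapp s h \<notin> L))"
  shows "\<exists>\<psi>. is_sHML \<psi> \<and> closed_form \<psi> \<and> guarded \<psi> \<and> semC \<psi> = L"
proof -
  obtain idx :: "'a ftrace set \<Rightarrow> nat" and N where "idx ` Rs = {i. i < N}" "inj_on idx Rs"
    using finite_imp_inj_to_nat_seg[OF fin] by blast
  then interpret fam Rs idx using fin clo by unfold_locales auto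
  let ?p = "mk idx (card Rs) L {}"
  have "fv ?p \<subseteq> {}" using mk_fv[OF L, of "{}" "card Rs"] by simp
  moreover have "L \<subseteq> semC ?p" unfolding semC_def by (rule mk_lower) (use L in auto)
  moreover have "semC ?p \<subseteq> L"
  proof
    fix g assume g: "g \<in> semC ?p"
    show "g \<in> L"
    proof (rule ccontr)
      assume "g \<notin> L"
      then obtain s where s: "tprefix s g" "\<forall>h. tapp s h \<notin> L" using saf by blast
      have "semC ?p \<subseteq> Good (Suc (length s)) L" unfolding semC_def by (rule mk_upper) (use L in auto)
      with g s show False by (auto simp: Good_def)
    qed
  qed
  ultimately show ?thesis using mk_sHML mk_guarded
    by (metis closed_form_def guarded_def subset_antisym subset_empty)
qed

section \<open>Finitely many residuals\<close>

type_synonym 'b ctx = "(var \<times> 'b form) list"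

fun env :: "'a ctx \<Rightarrow> var \<Rightarrow> 'a ftrace set" where
  "env [] = (\<lambda>_. {})"
| "env ((x,b)#c) = (env c)(x := semF b (env c))"

fun walk :: "'a form \<Rightarrow> 'a ctx \<Rightarrow> ('a form \<times> 'a ctx) set" where
  "walk TT c = {(TT,c)}" | "walk FF c = {(FF,c)}"
| "walk (Or p q) c = insert (Or p q, c) (walk p c \<union> walk q c)"
| "walk (And p q) c = insert (And p q, c) (walk p c \<union> walk q c)"
| "walk (Dia A p) c = insert (Dia A p, c) (walk p c)"
| "walk (Box A p) c = insert (Box A p, c) (walk p c)"
| "walk (Min x p) c = insert (Min x p, c) (walk p ((x, Min x p)#c))"
| "walk (Max x p) c = insert (Max x p, c) (walk p ((x, Max x p)#c))"
| "walk (FVar x) c = {(FVar x, c)}"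

lemma walk_finite: "finite (walk p c)"
  by (induction p arbitrary: c) auto

lemma walk_self: "(p, c) \<in> walk p c"
  by (cases p) auto

lemma walk_trans: "(q, c') \<in> walk p c \<Longrightarrow> walk q c' \<subseteq> walk p c"
  by (induction p arbitrary: c) auto

lemma guarded_anti: "guarded_in S p \<Longrightarrow> S' \<subseteq> S \<Longrightarrow> guarded_in S' p"
  by (induction S p arbitrary: S' rule: guarded_in.induct) (auto, blast+)

lemma walk_guarded: "(q, c') \<in> walk p c \<Longrightarrow> guarded_in S p \<Longrightarrow> guarded_in {} q"
proof (induction p arbitrary: c S)
  case (Min x p) then show ?case using guarded_anti by fastforce
next
  case (Max x p) then show ?case using guarded_anti by fastforce
qed (auto intro: guarded_anti)

lemma walk_ctx:
  "(q, c') \<in> walk p c \<Longrightarrow> walk p c \<subseteq> W \<Longrightarrow> (\<forall>pre x b d. c = pre @ (x,b)#d \<longrightarrow> (b,d) \<in> W)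
   \<Longrightarrow> c' = pre @ (x,b)#d \<Longrightarrow> (b,d) \<in> W"
proof (induction p arbitrary: c pre)
  case (Min y p)
  show ?case
  proof (cases "(q,c') = (Min y p, c)")
    case True then show ?thesis using Min by auto
  next
    case False
    have h: "\<forall>pre x b d. (y, Min y p)#c = pre @ (x,b)#d \<longrightarrow> (b,d) \<in> W"
    proof (intro allI impI)
      fix pre x b d assume e: "(y, Min y p)#c = pre @ (x,b)#d"
      show "(b,d) \<in> W"
      proof (cases pre)
        case Nil then show ?thesis using e Min.prems(2) walk_self[of "Min y p" c] by auto
      next
        case (Cons z pre') then show ?thesis using e Min.prems(3) by auto
      qed
    qed
    show ?thesis using False Min by (intro Min.IH[OF _ _ h]) auto
  qed
next
  case (Max y p)
  show ?case
  proof (cases "(q,c') = (Max y p, c)")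
    case True then show ?thesis using Max by auto
  next
    case False
    have h: "\<forall>pre x b d. (y, Max y p)#c = pre @ (x,b)#d \<longrightarrow> (b,d) \<in> W"
    proof (intro allI impI)
      fix pre x b d assume e: "(y, Max y p)#c = pre @ (x,b)#d"
      show "(b,d) \<in> W"
      proof (cases pre)
        case Nil then show ?thesis using e Max.prems(2) walk_self[of "Max y p" c] by auto
      next
        case (Cons z pre') then show ?thesis using e Max.prems(3) by auto
      qed
    qed
    show ?thesis using False Max by (intro Max.IH[OF _ _ h]) auto
  qed
qed auto

lemma env_lookup: "env c y = {} \<or> (\<exists>pre b d. c = pre @ (y,b)#d \<and> env c y = semF b (env d))"
proof (induction c)
  case (Cons e c)
  obtain x b where e: "e = (x,b)" by fastforce
  show ?case
  proof (cases "x = y")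
    case True then show ?thesis using e by (intro disjI2 exI[of _ "[]"]) auto
  next
    case False
    then show ?thesis using Cons e by (auto, metis append_Cons)
  qed
qed simp

lemma env_append: "y \<notin> fst ` set added \<Longrightarrow> env (added @ c) y = env c y"
  by (induction added) auto

definition val :: "'a form \<times> 'a ctx \<Rightarrow> 'a ftrace set" where
  "val w = semF (fst w) (env (snd w))"

definition Bs :: "('a form \<times> 'a ctx) set \<Rightarrow> 'a ftrace set set" where
  "Bs W = {X. \<exists>SS. SS \<subseteq> Pow W \<and> X = (\<Union>T\<in>SS. \<Inter>w\<in>T. val w)}"

lemma Bs_empty: "{} \<in> Bs W"
  unfolding Bs_def by (intro CollectI exI[of _ "{}"]) auto

lemma Bs_UNIV: "UNIV \<in> Bs W"
  unfolding Bs_def by (intro CollectI exI[of _ "{{}}"]) auto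

lemma Bs_val: "w \<in> W \<Longrightarrow> val w \<in> Bs W"
  unfolding Bs_def by (intro CollectI exI[of _ "{{w}}"]) auto

lemma Bs_Un: "X \<in> Bs W \<Longrightarrow> Y \<in> Bs W \<Longrightarrow> X \<union> Y \<in> Bs W"
proof -
  assume "X \<in> Bs W" "Y \<in> Bs W"
  then obtain S1 S2 where "S1 \<subseteq> Pow W" "X = (\<Union>T\<in>S1. \<Inter>w\<in>T. val w)"
    "S2 \<subseteq> Pow W" "Y = (\<Union>T\<in>S2. \<Inter>w\<in>T. val w)" unfolding Bs_def by blast
  then show ?thesis unfolding Bs_def by (intro CollectI exI[of _ "S1 \<union> S2"]) auto
qed

lemma Bs_Int: "X \<in> Bs W \<Longrightarrow> Y \<in> Bs W \<Longrightarrow> X \<inter> Y \<in> Bs W"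
proof -
  assume "X \<in> Bs W" "Y \<in> Bs W"
  then obtain S1 S2 where s: "S1 \<subseteq> Pow W" "X = (\<Union>T\<in>S1. \<Inter>w\<in>T. val w)"
    "S2 \<subseteq> Pow W" "Y = (\<Union>T\<in>S2. \<Inter>w\<in>T. val w)" unfolding Bs_def by blast
  let ?S = "{T1 \<union> T2 | T1 T2. T1 \<in> S1 \<and> T2 \<in> S2}"
  have "X \<inter> Y = (\<Union>T\<in>?S. \<Inter>w\<in>T. val w)"
  proof
    show "X \<inter> Y \<subseteq> (\<Union>T\<in>?S. \<Inter>w\<in>T. val w)"
    proof
      fix g assume "g \<in> X \<inter> Y"
      then obtain T1 T2 where "T1 \<in> S1" "T2 \<in> S2" "\<forall>w\<in>T1. g \<in> val w" "\<forall>w\<in>T2. g \<in> val w"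
        using s by auto
      then show "g \<in> (\<Union>T\<in>?S. \<Inter>w\<in>T. val w)" by blast
    qed
  next
    show "(\<Union>T\<in>?S. \<Inter>w\<in>T. val w) \<subseteq> X \<inter> Y" using s by blast
  qed
  moreover have "?S \<subseteq> Pow W" using s by blast
  ultimately show ?thesis unfolding Bs_def by blast
qed

lemma Bs_finite: "finite W \<Longrightarrow> finite (Bs W)"
proof -
  assume "finite W"
  have "Bs W \<subseteq> (\<lambda>SS. \<Union>T\<in>SS. \<Inter>w\<in>T. val w) ` Pow (Pow W)" unfolding Bs_def by blast
  then show ?thesis using \<open>finite W\<close> by (meson finite_Pow_iff finite_imageI finite_subset)
qed

lemma Bs_Inter_fin: "finite T \<Longrightarrow> (\<forall>w\<in>T. f w \<in> Bs W) \<Longrightarrow> (\<Inter>w\<in>T. f w) \<in> Bs W"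
  by (induction T rule: finite_induct) (auto intro: Bs_UNIV Bs_Int)

lemma Bs_Union_fin: "finite T \<Longrightarrow> (\<forall>w\<in>T. f w \<in> Bs W) \<Longrightarrow> (\<Union>w\<in>T. f w) \<in> Bs W"
  by (induction T rule: finite_induct) (auto intro: Bs_empty Bs_Un)

lemma Bs_res:
  assumes fin: "finite W" and h: "\<forall>w\<in>W. res a (val w) \<in> Bs W" and X: "X \<in> Bs W"
  shows "res a X \<in> Bs W"
proof -
  obtain SS where s: "SS \<subseteq> Pow W" "X = (\<Union>T\<in>SS. \<Inter>w\<in>T. val w)" using X unfolding Bs_def by blast
  have "res a X = (\<Union>T\<in>SS. \<Inter>w\<in>T. res a (val w))" using s(2) by (auto simp: res_def)
  moreover have "finite SS" using s(1) fin by (meson finite_Pow_iff finite_subset)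
  moreover have "\<forall>T\<in>SS. finite T" using s(1) fin by (meson PowD finite_subset subsetD)
  ultimately show ?thesis using s(1) h
    by (auto intro!: Bs_Union_fin Bs_Inter_fin) blast
qed

lemma res_Dia: "res a {tcons b g | b g. b \<in> A \<and> g \<in> X} = (if a \<in> A then X else {})"
  by (auto simp: res_def)

lemma res_Box: "res a {g. \<forall>b\<in>A. \<forall>g'. g = tcons b g' \<longrightarrow> g' \<in> X} = (if a \<in> A then X else UNIV)"
  by (auto simp: res_def)


lemma res_inner:
  fixes W :: "('a form \<times> 'a ctx) set"
  assumes IH: "\<forall>q' c'. (q',c') \<in> W \<longrightarrow> length c' < length c0 \<longrightarrow> res a (val (q',c')) \<in> Bs W"
    and inv: "\<forall>q' c' pre x b d. (q',c') \<in> W \<longrightarrow> c' = pre @ (x,b)#d \<longrightarrow> (b,d) \<in> W"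
  shows "walk q (added @ c0) \<subseteq> W \<Longrightarrow> guarded_in S q \<Longrightarrow> fst ` set added = S
     \<Longrightarrow> res a (semF q (env (added @ c0))) \<in> Bs W"
proof (induction q arbitrary: added S)
  case TT then show ?case by (simp add: res_def Bs_UNIV)
next
  case FF then show ?case by (simp add: res_def Bs_empty)
next
  case (Or p q)
  have "res a (semF (Or p q) (env (added @ c0))) = res a (semF p (env (added @ c0))) \<union> res a (semF q (env (added @ c0)))"
    by (auto simp: res_def)
  then show ?case using Or by (auto intro!: Bs_Un)
next
  case (And p q)
  have "res a (semF (And p q) (env (added @ c0))) = res a (semF p (env (added @ c0))) \<inter> res a (semF q (env (added @ c0)))"
    by (auto simp: res_def)
  then show ?case using And by (auto intro!: Bs_Int)
next
  case (Dia A p)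
  have "(p, added @ c0) \<in> W" using Dia.prems(1) walk_self[of p] by auto
  then show ?case by (simp only: semF.simps res_Dia) (auto intro: Bs_empty Bs_val[where w="(p, added @ c0)", simplified val_def, simplified])
next
  case (Box A p)
  have "(p, added @ c0) \<in> W" using Box.prems(1) walk_self[of p] by auto
  then show ?case by (simp only: semF.simps res_Box) (auto intro: Bs_UNIV Bs_val[where w="(p, added @ c0)", simplified val_def, simplified])
next
  case (Min x p)
  let ?s = "env (added @ c0)"
  have "semF (Min x p) ?s = semF p (?s(x := semF (Min x p) ?s))"
    using lfp_unfold[OF mono_semF[of p ?s x]] by simp
  also have "\<dots> = semF p (env (((x, Min x p) # added) @ c0))" by simp
  finally have e: "semF (Min x p) ?s = semF p (env (((x, Min x p) # added) @ c0))" .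
  have "res a (semF p (env (((x, Min x p) # added) @ c0))) \<in> Bs W"
    using Min.prems by (intro Min.IH[where S="insert x S"]) auto
  then show ?case using e by simp
next
  case (Max x p)
  let ?s = "env (added @ c0)"
  have "semF (Max x p) ?s = semF p (?s(x := semF (Max x p) ?s))"
    using gfp_unfold[OF mono_semF[of p ?s x]] by simp
  also have "\<dots> = semF p (env (((x, Max x p) # added) @ c0))" by simp
  finally have e: "semF (Max x p) ?s = semF p (env (((x, Max x p) # added) @ c0))" .
  have "res a (semF p (env (((x, Max x p) # added) @ c0))) \<in> Bs W"
    using Max.prems by (intro Max.IH[where S="insert x S"]) auto
  then show ?case using e by simp
next
  case (FVar y)
  then have yn: "y \<notin> fst ` set added" by simp
  have e: "semF (FVar y) (env (added @ c0)) = env c0 y" using env_append[OF yn] by simp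
  from env_lookup[of c0 y] show ?case
  proof
    assume "env c0 y = {}" then show ?thesis using e by (simp add: res_def Bs_empty)
  next
    assume "\<exists>pre b d. c0 = pre @ (y,b)#d \<and> env c0 y = semF b (env d)"
    then obtain pre b d where pd: "c0 = pre @ (y,b)#d" "env c0 y = semF b (env d)" by blast
    have "(FVar y, added @ c0) \<in> W" using FVar.prems(1) by simp
    then have "(b,d) \<in> W" using inv pd(1) by (metis append.assoc)
    moreover have "length d < length c0" using pd(1) by simp
    ultimately have "res a (val (b,d)) \<in> Bs W" using IH by blast
    then show ?thesis using e pd(2) by (simp add: val_def)
  qed
qed

lemma res_all:
  assumes g: "guarded_in {} \<phi>"
  shows "\<forall>w\<in>walk \<phi> []. res a (val w) \<in> Bs (walk \<phi> [])"
proof -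
  let ?W = "walk \<phi> []"
  have inv: "\<forall>q' c' pre x b d. (q',c') \<in> ?W \<longrightarrow> c' = pre @ (x,b)#d \<longrightarrow> (b,d) \<in> ?W"
    using walk_ctx[of _ _ \<phi> "[]" ?W] by auto
  have "\<forall>q c. (q,c) \<in> ?W \<longrightarrow> length c = n \<longrightarrow> res a (val (q,c)) \<in> Bs ?W" for n
  proof (induction n rule: less_induct)
    case (less n)
    show ?case
    proof (intro allI impI)
      fix q c assume qc: "(q,c) \<in> ?W" "length c = n"
      have IH: "\<forall>q' c'. (q',c') \<in> ?W \<longrightarrow> length c' < length c \<longrightarrow> res a (val (q',c')) \<in> Bs ?W"
        using less qc(2) by blast
      have "res a (semF q (env ([] @ c))) \<in> Bs ?W"
        using res_inner[OF IH inv, of q "[]" "{}"] walk_trans[OF qc(1)] walk_guarded[OF qc(1) g] by simp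
      then show "res a (val (q,c)) \<in> Bs ?W" by (simp add: val_def)
    qed
  qed
  then show ?thesis by auto
qed



fun neg :: "'a form \<Rightarrow> 'a form" where
  "neg TT = FF" | "neg FF = TT"
| "neg (Or p q) = And (neg p) (neg q)" | "neg (And p q) = Or (neg p) (neg q)"
| "neg (Dia A p) = Box A (neg p)" | "neg (Box A p) = Dia A (neg p)"
| "neg (Min x p) = Max x (neg p)" | "neg (Max x p) = Min x (neg p)"
| "neg (FVar x) = FVar x"

lemma neg_fv: "fv (neg p) = fv p" by (induction p) auto
lemma neg_guarded: "guarded_in S (neg p) = guarded_in S p" by (induction p arbitrary: S) auto
lemma neg_cHML: "is_sHML p \<Longrightarrow> is_cHML (neg p)" by (induction p) auto

lemma gfp_dual:
  assumes m: "mono (f::'b set \<Rightarrow> 'b set)"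
  shows "gfp (\<lambda>S. - f (- S)) = - lfp f"
proof -
  have mg: "mono (\<lambda>S. - f (- S))" using m by (auto simp: mono_def)
  have "lfp (\<lambda>S. - (- f (- (- S)))) = - gfp (\<lambda>S. - f (- S))" by (rule lfp_dual[OF mg])
  then show ?thesis by simp
qed

lemma semF_neg: "semF (neg p) \<sigma> = - semF p (\<lambda>x. - \<sigma> x)"
proof (induction p arbitrary: \<sigma>)
  case (Dia A p)
  have "semF (neg (Dia A p)) \<sigma> = {g. \<forall>a\<in>A. \<forall>g'. g = tcons a g' \<longrightarrow> g' \<in> - semF p (\<lambda>x. - \<sigma> x)}"
    by (simp only: neg.simps semF.simps Dia.IH)
  also have "\<dots> = - semF (Dia A p) (\<lambda>x. - \<sigma> x)" by (simp only: semF.simps) blast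
  finally show ?case .
next
  case (Box A p)
  have "semF (neg (Box A p)) \<sigma> = {tcons a g | a g. a \<in> A \<and> g \<in> - semF p (\<lambda>x. - \<sigma> x)}"
    by (simp only: neg.simps semF.simps Box.IH)
  also have "\<dots> = - semF (Box A p) (\<lambda>x. - \<sigma> x)" by (simp only: semF.simps) blast
  finally show ?case .
next
  case (Min x p)
  have e: "\<And>S. (\<lambda>y. - (\<sigma>(x:=S)) y) = (\<lambda>y. - \<sigma> y)(x := - S)" by (rule ext) simp
  have "semF (neg (Min x p)) \<sigma> = gfp (\<lambda>S. semF (neg p) (\<sigma>(x:=S)))" by simp
  also have "\<dots> = gfp (\<lambda>S. - semF p ((\<lambda>y. - \<sigma> y)(x := - S)))"
    by (simp only: Min.IH e)
  also have "\<dots> = - lfp (\<lambda>S. semF p ((\<lambda>y. - \<sigma> y)(x := S)))" by (rule gfp_dual[OF mono_semF])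
  finally show ?case by simp
next
  case (Max x p)
  have e: "\<And>S. (\<lambda>y. - (\<sigma>(x:=S)) y) = (\<lambda>y. - \<sigma> y)(x := - S)" by (rule ext) simp
  have "semF (neg (Max x p)) \<sigma> = lfp (\<lambda>S. semF (neg p) (\<sigma>(x:=S)))" by simp
  also have "\<dots> = lfp (\<lambda>S. - semF p ((\<lambda>y. - \<sigma> y)(x := - S)))"
    by (simp only: Max.IH e)
  also have "\<dots> = - gfp (\<lambda>S. semF p ((\<lambda>y. - \<sigma> y)(x := S)))" by (rule lfp_dual[OF mono_semF])
  finally show ?case by simp
qed auto

lemma semF_cong: "(\<forall>x\<in>fv p. \<sigma> x = \<sigma>' x) \<Longrightarrow> semF p \<sigma> = semF p \<sigma>'"
proof (induction p arbitrary: \<sigma> \<sigma>')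
  case (Min x p)
  have "\<And>S. semF p (\<sigma>(x:=S)) = semF p (\<sigma>'(x:=S))" using Min.prems by (intro Min.IH) auto
  then show ?case by simp
next
  case (Max x p)
  have "\<And>S. semF p (\<sigma>(x:=S)) = semF p (\<sigma>'(x:=S))" using Max.prems by (intro Max.IH) auto
  then show ?case by simp
next
  case (Or p q)
  have "semF p \<sigma> = semF p \<sigma>'" "semF q \<sigma> = semF q \<sigma>'" using Or.prems by (intro Or.IH; simp)+
  then show ?case by simp
next
  case (And p q)
  have "semF p \<sigma> = semF p \<sigma>'" "semF q \<sigma> = semF q \<sigma>'" using And.prems by (intro And.IH; simp)+
  then show ?case by simp
next
  case (Dia A p)
  have "semF p \<sigma> = semF p \<sigma>'" using Dia.prems by (intro Dia.IH) simp
  then show ?case by simp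
next
  case (Box A p)
  have "semF p \<sigma> = semF p \<sigma>'" using Box.prems by (intro Box.IH) simp
  then show ?case by simp
qed simp_all

theorem mainTheorem12:
  fixes \<phi> :: "'a::finite form"
  assumes "closed_form \<phi>" and "guarded \<phi>"
  shows "((\<exists>m. closed_mon m \<and> reactive m \<and> sound m \<phi> \<and> viol_complete m \<phi>)
           \<longrightarrow> (\<exists>\<psi>. is_sHML \<psi> \<and> closed_form \<psi> \<and> guarded \<psi> \<and> semC \<psi> = semC \<phi>))
       \<and> ((\<exists>m. closed_mon m \<and> reactive m \<and> sound m \<phi> \<and> sat_complete m \<phi>)
           \<longrightarrow> (\<exists>\<psi>. is_cHML \<psi> \<and> closed_form \<psi> \<and> guarded \<psi> \<and> semC \<psi> = semC \<phi>))"
proof -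
  let ?W = "walk \<phi> []"
  let ?L = "semC \<phi>"
  have finRs: "finite (Bs ?W)" by (rule Bs_finite[OF walk_finite])
  have LRs: "?L \<in> Bs ?W" using Bs_val[OF walk_self[of \<phi> "[]"]] by (simp add: val_def semC_def)
  have cloRs: "\<forall>R\<in>Bs ?W. \<forall>a. res a R \<in> Bs ?W"
    using Bs_res[OF walk_finite res_all] assms(2) by (auto simp: guarded_def)
  have pref: "tprefix s (tapp s h)" for s :: "'a list" and h by (auto simp: tprefix_def)
  show ?thesis
  proof (intro conjI impI)
    assume "\<exists>m. closed_mon m \<and> reactive m \<and> sound m \<phi> \<and> viol_complete m \<phi>"
    then obtain m where m: "sound m \<phi>" "viol_complete m \<phi>" by blast
    have saf: "\<forall>g. g \<notin> ?L \<longrightarrow> (\<exists>s. tprefix s g \<and> (\<forall>h. tapp s h \<notin> ?L))"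
    proof (intro allI impI)
      fix g assume "g \<notin> ?L"
      then obtain s where s: "tprefix s g" "wtrans m s (V No)"
        using m(2) by (auto simp: viol_complete_def rejects_def)
      have "\<forall>h. tapp s h \<notin> ?L" using s(2) pref m(1) by (auto simp: sound_def rejects_def)
      then show "\<exists>s. tprefix s g \<and> (\<forall>h. tapp s h \<notin> ?L)" using s(1) by blast
    qed
    show "\<exists>\<psi>. is_sHML \<psi> \<and> closed_form \<psi> \<and> guarded \<psi> \<and> semC \<psi> = semC \<phi>"
      by (rule safety_sHML[OF finRs cloRs LRs saf])
  next
    assume "\<exists>m. closed_mon m \<and> reactive m \<and> sound m \<phi> \<and> sat_complete m \<phi>"
    then obtain m where m: "sound m \<phi>" "sat_complete m \<phi>" by blast
    have saf: "\<forall>g. g \<notin> - ?L \<longrightarrow> (\<exists>s. tprefix s g \<and> (\<forall>h. tapp s h \<notin> - ?L))"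
    proof (intro allI impI)
      fix g assume "g \<notin> - ?L"
      then obtain s where s: "tprefix s g" "wtrans m s (V Yes)"
        using m(2) by (auto simp: sat_complete_def accepts_def)
      have "\<forall>h. tapp s h \<notin> - ?L" using s(2) pref m(1) by (auto simp: sound_def accepts_def)
      then show "\<exists>s. tprefix s g \<and> (\<forall>h. tapp s h \<notin> - ?L)" using s(1) by blast
    qed
    have fin2: "finite (uminus ` Bs ?W)" using finRs by simp
    have res_c: "res a (- R) = - res a R" for a R by (auto simp: res_def)
    have clo2: "\<forall>R\<in>uminus ` Bs ?W. \<forall>a. res a R \<in> uminus ` Bs ?W"
      using cloRs by (auto simp: res_c)
    have L2: "- ?L \<in> uminus ` Bs ?W" using LRs by simp
    obtain \<psi> where \<psi>: "is_sHML \<psi>" "closed_form \<psi>" "guarded \<psi>" "semC \<psi> = - ?L"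
      using safety_sHML[OF fin2 clo2 L2 saf] by blast
    have "semC (neg \<psi>) = - semF \<psi> (\<lambda>x. UNIV)" by (simp add: semC_def semF_neg)
    also have "semF \<psi> (\<lambda>x. UNIV) = semC \<psi>"
      unfolding semC_def by (rule semF_cong) (use \<psi>(2) in \<open>simp add: closed_form_def\<close>)
    finally have "semC (neg \<psi>) = ?L" using \<psi>(4) by simp
    moreover have "is_cHML (neg \<psi>)" "closed_form (neg \<psi>)" "guarded (neg \<psi>)"
      using \<psi> by (auto simp: neg_cHML closed_form_def neg_fv guarded_def neg_guarded)
    ultimately show "\<exists>\<psi>. is_cHML \<psi> \<and> closed_form \<psi> \<and> guarded \<psi> \<and> semC \<psi> = semC \<phi>" by blast
  qed
qed

end
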